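(* Let $q$ be a power of an odd prime, $n>3$ an odd integer with $\gcd(n,q-1)=1$, $\delta\in\mathbb{F}_{q^n}^*$ with $\delta\neq1$ and multiplicative order of $\delta$ dividing $q-1$, and $0<r<n$ an integer with $\gcd(r,n)=1$. Then $S(x)=x^q+\delta x^{q^{2r+1}}$ is a scattered polynomial of index $r+1$ over $\mathbb{F}_{q^n}$. Moreover, $S(x)$ is a scattered polynomial of index $t$ over $\mathbb{F}_{q^n}$ for each $t\in\{1,r+1,2r+1\}$.
   Context: For a polynomial $S\in\mathbb{F}_{q^n}[x]$ and a nonnegative integer $t$, $S$ is a scattered polynomial of index $t$ over $\mathbb{F}_{q^n}$ if for all $y,z\in\mathbb{F}_{q^n}^*$, $\frac{S(y)}{y^{q^t}}=\frac{S(z)}{z^{q^t}}$ implies $y/z\in\mathbb{F}_q$ (exponents $q^{e}$ are evaluated as maps on $\mathbb{F}_{q^n}$, so only $e \bmod n$ matters). *)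

theory Defs
  imports "HOL-Computational_Algebra.Polynomial"
begin

text \<open>The field F_{q^n} is modelled as a finite field type 'a with CARD('a) = q^n.\<close>

definition in_Fq :: "nat \<Rightarrow> 'a::field \<Rightarrow> bool" where
  "in_Fq q a \<longleftrightarrow> a ^ q = a"

definition scattered :: "nat \<Rightarrow> 'a::{finite,field} poly \<Rightarrow> nat \<Rightarrow> bool" where
  "scattered q S t \<longleftrightarrow>
     (\<forall>y z. y \<noteq> 0 \<longrightarrow> z \<noteq> 0 \<longrightarrow>
        poly S y / y ^ (q ^ t) = poly S z / z ^ (q ^ t) \<longrightarrow> in_Fq q (y / z))"

end

theory Submission
  imports Defs
begin

lemma ff_pow_card:
  fixes x :: "'a::{finite,field}"
  shows "x ^ card (UNIV :: 'a set) = x"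
proof (cases "x = 0")
  case False
  have "x * (\<Prod>y\<in>UNIV-{0}. x * y) = x * x ^ (card (UNIV :: 'a set) - 1) * \<Prod>(UNIV-{0})"
    by (simp add: prod.distrib mult_ac)
  also have "x * x ^ (card (UNIV :: 'a set) - 1) = x ^ Suc (card (UNIV :: 'a set) - 1)"
    by (subst power_Suc) auto
  also have "Suc (card (UNIV :: 'a set) - 1) = card (UNIV :: 'a set)"
    using finite_UNIV_card_ge_0[where ?'a = 'a] by simp
  also have "(\<Prod>y\<in>UNIV-{0}. x * y) = (\<Prod>y\<in>UNIV-{0}. y)"
    by (rule prod.reindex_bij_witness[of _ "\<lambda>y. y / x" "\<lambda>y. x * y"]) (use False in auto)
  finally show ?thesis
    by simp
qed (use finite_UNIV_card_ge_0[where ?'a = 'a] in auto)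

lemma char_eq:
  fixes p e :: nat
  assumes "prime p" "e > 0" "card (UNIV :: 'a::{finite,field} set) = p ^ e"
  shows "CHAR('a) = p"
proof -
  have pos: "CHAR('a) > 0" by (rule finite_imp_CHAR_pos) simp
  have pr: "prime CHAR('a)" using prime_CHAR_semidom[OF pos] .
  have "(\<Sum>x\<in>(UNIV::'a set). x) = (\<Sum>x\<in>(UNIV::'a set). x + 1)"
    by (rule sum.reindex_bij_witness[of _ "\<lambda>x. x + 1" "\<lambda>x. x - 1"]) auto
  also have "\<dots> = (\<Sum>x\<in>(UNIV::'a set). x) + of_nat (card (UNIV::'a set))"
    by (simp add: sum.distrib)
  finally have "of_nat (card (UNIV::'a set)) = (0::'a)" by simp
  hence "CHAR('a) dvd p ^ e" using assms(3) of_nat_eq_0_iff_char_dvd by metis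
  hence "CHAR('a) dvd p" using pr prime_dvd_power by blast
  thus ?thesis using pr assms(1) by (simp add: primes_dvd_imp_eq)
qed

lemma iter_fix:
  fixes x :: "'a::field"
  assumes "x ^ (q ^ a) = x"
  shows "x ^ (q ^ (a * j)) = x"
proof (induction j)
  case 0 then show ?case by simp
next
  case (Suc j)
  have "x ^ (q ^ (a * Suc j)) = (x ^ (q ^ (a * j))) ^ (q ^ a)"
    by (simp add: power_add power_mult[symmetric] mult.commute)
  then show ?case using Suc assms by simp
qed

lemma sum_geom_id: "(\<Sum>i<n. (q::nat) ^ i) * q + 1 = (\<Sum>i<n. q ^ i) + q ^ n"
  by (induction n) (auto simp: algebra_simps)

lemma pow_sum_fix:
  fixes d :: "'a::field"
  assumes "d ^ q = d"
  shows "d ^ (\<Sum>i<n. q ^ i) = d ^ n"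
proof (induction n)
  case 0 then show ?case by simp
next
  case (Suc n)
  have "d ^ (q ^ n) = d" using iter_fix[of d q 1 n] assms by simp
  then show ?case using Suc by (simp add: power_add)
qed

lemma gcd_pow_one:
  fixes d :: "'a::field"
  assumes "d ^ a = 1" "d ^ b = 1" "a \<noteq> 0" "gcd a b = 1"
  shows "d = 1"
proof -
  obtain u v where uv: "a * u = b * v + gcd a b" using bezout_nat[OF assms(3)] by blast
  have "1 = d ^ (a * u)" using assms(1) by (simp add: power_mult)
  also have "\<dots> = d ^ (b * v) * d" using uv assms(4) by (simp add: power_add)
  also have "\<dots> = d" using assms(2) by (simp add: power_mult)
  finally show ?thesis by simp
qed

locale FF =
  fixes q n :: nat and dummy :: "'a::{finite,field} itself"
  assumes card: "card (UNIV :: 'a set) = q ^ n"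
    and n0: "n > 0" and q1: "q > 1"
    and frob: "\<And>x y :: 'a. (x + y) ^ q = x ^ q + y ^ q"
begin

lemma pow_qn: "(x::'a) ^ (q ^ n) = x"
  using ff_pow_card[of x] card by simp

lemma frob_inj: assumes "(x::'a) ^ q = y ^ q" shows "x = y"
proof -
  have "q ^ n = q * q ^ (n - 1)" using n0 by (cases n) auto
  hence "\<And>u::'a. u = (u ^ q) ^ (q ^ (n - 1))"
    using pow_qn by (metis power_mult)
  thus ?thesis using assms by metis
qed

lemma frob_pow: "((x::'a) + y) ^ (q ^ j) = x ^ (q ^ j) + y ^ (q ^ j)"
proof (induction j)
  case 0 then show ?case by simp
next
  case (Suc j)
  have "(x + y) ^ (q ^ Suc j) = ((x + y) ^ (q ^ j)) ^ q"
    by (simp add: power_mult[symmetric] mult.commute)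
  also have "\<dots> = (x ^ (q ^ j)) ^ q + (y ^ (q ^ j)) ^ q" using Suc frob by simp
  also have "\<dots> = x ^ (q ^ Suc j) + y ^ (q ^ Suc j)"
    by (simp add: power_mult[symmetric] mult.commute)
  finally show ?case .
qed

lemma frob_diff: "((x::'a) - y) ^ (q ^ j) = x ^ (q ^ j) - y ^ (q ^ j)"
  using frob_pow[of "x - y" y j] by (simp add: algebra_simps)

lemma fix_coprime:
  assumes "(x::'a) ^ (q ^ a) = x" "coprime a n" "a \<noteq> 0"
  shows "x ^ q = x"
proof -
  obtain u v where uv: "a * u = n * v + gcd a n" using bezout_nat[OF assms(3)] by blast
  have g: "gcd a n = 1" using assms(2) by simp
  have e: "q ^ (a * u) = q ^ (n * v) * q" using uv g by simp
  have "x = x ^ (q ^ (a * u))" using iter_fix[OF assms(1)] by simp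
  also have "\<dots> = (x ^ (q ^ (n * v))) ^ q" unfolding e by (rule power_mult)
  also have "x ^ (q ^ (n * v)) = x" using iter_fix[of x q n v] pow_qn by simp
  finally show ?thesis by simp
qed

definition "m = (\<Sum>i<n. q ^ i)"

lemma m_pos: "m > 0"
  unfolding m_def using n0 q1 by (intro sum_pos2[of _ 0]) auto

lemma N_fix: "((x::'a) ^ m) ^ q = x ^ m"
proof (cases "x = 0")
  case True then show ?thesis using m_pos q1 by (simp add: power_0_left)
next
  case False
  have "x ^ (m * q) * x = x ^ m * x ^ (q ^ n)"
  proof -
    have "x ^ (m * q) * x = x ^ (m * q + 1)" by simp
    also have "m * q + 1 = m + q ^ n" using sum_geom_id[where n=n and q=q] unfolding m_def by simp
    also have "x ^ (m + q ^ n) = x ^ m * x ^ (q ^ n)" by (rule power_add)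
    finally show ?thesis .
  qed
  hence "x ^ (m * q) * x = x ^ m * x" using pow_qn by simp
  hence "x ^ (m * q) = x ^ m" using False by simp
  thus ?thesis by (simp add: power_mult)
qed

lemma N_frob: "((x::'a) ^ (q ^ j)) ^ m = x ^ m"
proof -
  have "((x::'a) ^ (q ^ j)) ^ m = (x ^ m) ^ (q ^ (1 * j))"
    by (simp add: power_mult[symmetric] mult.commute)
  also have "\<dots> = x ^ m" by (rule iter_fix) (simp add: N_fix)
  finally show ?thesis .
qed


lemma scat_main:
  fixes \<delta> :: 'a and r t :: nat
  assumes d0: "\<delta> \<noteq> 0" and dq: "\<delta> ^ q = \<delta>" and dn: "\<delta> ^ n \<noteq> 1"
    and r0: "r > 0" and cr: "coprime r n" and c2r: "coprime (2 * r) n"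
    and tt: "t \<in> {1, r + 1, 2 * r + 1}"
  shows "scattered q (monom 1 q + monom \<delta> (q ^ (2 * r + 1))) t"
  unfolding scattered_def in_Fq_def
proof (intro allI impI)
  fix y z :: 'a
  assume y0: "y \<noteq> 0" and z0: "z \<noteq> 0"
  assume eq: "poly (monom 1 q + monom \<delta> (q ^ (2 * r + 1))) y / y ^ q ^ t =
       poly (monom 1 q + monom \<delta> (q ^ (2 * r + 1))) z / z ^ q ^ t"
  define l where "l = y / z"
  have yl: "y = l * z" using z0 unfolding l_def by simp
  have l0: "l \<noteq> 0" using y0 z0 unfolding l_def by simp
  define s where "s = q ^ r"
  define \<mu> where "\<mu> = l ^ q"
  define w where "w = z ^ q"
  define A where "A = (\<mu> ^ s) ^ s"
  define B where "B = (w ^ s) ^ s"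
  have w0: "w \<noteq> 0" using z0 unfolding w_def by simp
  have B0: "B \<noteq> 0" using w0 unfolding B_def by simp
  have Q: "q ^ (2 * r + 1) = q * s * s" unfolding s_def by (simp add: power_add power_mult power2_eq_square algebra_simps)
  have lQ: "l ^ (q ^ (2 * r + 1)) = A" unfolding Q A_def \<mu>_def by (simp add: power_mult)
  have zQ: "z ^ (q ^ (2 * r + 1)) = B" unfolding Q B_def w_def by (simp add: power_mult)
  have yq: "y ^ q = \<mu> * w" unfolding yl \<mu>_def w_def by (simp add: power_mult_distrib)
  have yQ: "y ^ (q ^ (2 * r + 1)) = A * B" unfolding yl using lQ zQ by (simp add: power_mult_distrib)
  have zT: "z ^ q ^ t \<noteq> 0" using z0 by simp
  have lT: "l ^ q ^ t \<noteq> 0" using l0 by simp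
  have eq2: "(\<mu> * w + \<delta> * (A * B)) / (l ^ q ^ t * z ^ q ^ t) = (w + \<delta> * B) / z ^ q ^ t"
    using eq unfolding poly_add poly_monom yq yQ zQ w_def[symmetric]
    by (simp add: yl power_mult_distrib)
  have E: "\<mu> * w + \<delta> * (A * B) = l ^ q ^ t * (w + \<delta> * B)"
  proof -
    have "(\<mu> * w + \<delta> * (A * B)) * z ^ q ^ t = (l ^ q ^ t * (w + \<delta> * B)) * z ^ q ^ t"
      using eq2 zT lT by (simp add: field_simps)
    thus ?thesis using zT mult_right_cancel by blast
  qed
  have AA: "A = \<mu> ^ (q ^ (2 * r))" unfolding A_def s_def by (simp add: power_mult[symmetric] power_mult_distrib mult_2 power_add)
  have fin: "l ^ q = l" if "\<mu> ^ q = \<mu>"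
    using frob_inj[of "l ^ q" l] that unfolding \<mu>_def by simp
  from tt consider "t = 1" | "t = r + 1" | "t = 2 * r + 1" by auto
  then have "l ^ q = l"
  proof cases
    case 1
    hence "\<delta> * (A * B) = \<delta> * (\<mu> * B)" using E by (simp add: \<mu>_def algebra_simps)
    hence "A = \<mu>" using d0 B0 by simp
    hence "\<mu> ^ q = \<mu>" using fix_coprime[of \<mu> "2 * r"] AA c2r r0 by simp
    thus ?thesis by (rule fin)
  next
    case 3
    have "l ^ q ^ t = A" using 3 lQ by simp
    hence "\<mu> * w = A * w" using E by (simp add: algebra_simps)
    hence "A = \<mu>" using w0 by simp
    hence "\<mu> ^ q = \<mu>" using fix_coprime[of \<mu> "2 * r"] AA c2r r0 by simp
    thus ?thesis by (rule fin)
  next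
    case 2
    have lt: "l ^ q ^ t = \<mu> ^ s" unfolding 2 \<mu>_def s_def by (simp add: power_mult[symmetric] mult.commute)
    define a where "a = \<mu> - \<mu> ^ s"
    have as: "a ^ s = \<mu> ^ s - A" unfolding a_def A_def s_def by (rule frob_diff)
    have E2: "\<mu> * w + \<delta> * (A * B) = \<mu> ^ s * (w + \<delta> * B)" using E lt by simp
    have "a * w = \<delta> * (\<mu> ^ s - A) * B" unfolding a_def using E2 by (simp add: algebra_simps)
    hence aw: "a * w = \<delta> * a ^ s * B" using as by simp
    show ?thesis
    proof (cases "a = 0")
      case True
      hence "\<mu> ^ (q ^ r) = \<mu>" unfolding a_def s_def by simp
      hence "\<mu> ^ q = \<mu>" using fix_coprime[of \<mu> r] cr r0 by simp
      thus ?thesis by (rule fin)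
    next
      case False
      have "(a * w) ^ m = (\<delta> * a ^ s * B) ^ m" using aw by simp
      hence "a ^ m * w ^ m = \<delta> ^ m * (a ^ s) ^ m * B ^ m" by (simp add: power_mult_distrib)
      moreover have "(a ^ s) ^ m = a ^ m" unfolding s_def by (rule N_frob)
      moreover have "B ^ m = w ^ m" unfolding B_def s_def using N_frob by simp
      moreover have "\<delta> ^ m = \<delta> ^ n" unfolding m_def by (rule pow_sum_fix[OF dq])
      ultimately have "a ^ m * w ^ m = \<delta> ^ n * (a ^ m * w ^ m)" by (simp only: mult_ac)
      moreover have "a ^ m * w ^ m \<noteq> 0" using False w0 by simp
      ultimately have "\<delta> ^ n = 1" using m_pos by auto
      with dn show ?thesis by simp
    qed
  qed
  thus "(y / z) ^ q = y / z" unfolding l_def .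
qed

end


theorem mainTheorem13:
  fixes q n r k p :: nat and \<delta> :: "'a::{finite,field}"
  assumes "prime p" and "odd p" and "k > 0" and "q = p ^ k"
    and "card (UNIV :: 'a set) = q ^ n"
    and "n > 3" and "odd n" and "gcd n (q - 1) = 1"
    and "\<delta> \<noteq> 0" and "\<delta> \<noteq> 1" and "\<delta> ^ (q - 1) = 1"
    and "0 < r" and "r < n" and "coprime r n"
  shows "scattered q (monom 1 q + monom \<delta> (q ^ (2 * r + 1))) (r + 1) \<and>
         (\<forall>t \<in> {1, r + 1, 2 * r + 1}.
            scattered q (monom 1 q + monom \<delta> (q ^ (2 * r + 1))) t)"
proof -
  have p1: "p > 1" using assms(1) prime_gt_1_nat by blast
  have q1: "q > 1" using p1 assms(3,4) by (metis One_nat_def one_less_power)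
  have card: "card (UNIV :: 'a set) = p ^ (k * n)" using assms(4,5) by (simp add: power_mult)
  have kn: "k * n > 0" using assms(3,6) by simp
  have ch: "CHAR('a) = p" by (rule char_eq[OF assms(1) kn card])
  have frob: "\<And>x y :: 'a. (x + y) ^ q = x ^ q + y ^ q"
  proof -
    fix x y :: 'a
    show "(x + y) ^ q = x ^ q + y ^ q"
      by (rule freshmans_dream'[where n = k]) (use ch assms(1,4) in auto)
  qed
  interpret FF q n "TYPE('a)"
    by unfold_locales (use assms(5,6) q1 frob in auto)
  have dq: "\<delta> ^ q = \<delta>"
  proof -
    have "q = (q - 1) + 1" using q1 by simp
    hence "\<delta> ^ q = \<delta> ^ (q - 1) * \<delta>" by (metis power_add power_one_right)
    thus ?thesis using assms(11) by simp
  qed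
  have dn: "\<delta> ^ n \<noteq> 1"
  proof
    assume "\<delta> ^ n = 1"
    hence "\<delta> = 1" using gcd_pow_one[of \<delta> n "q - 1"] assms(6,8,11) by simp
    with assms(10) show False by simp
  qed
  have c2: "coprime 2 n" using assms(7) by simp
  have c2r: "coprime (2 * r) n" using c2 assms(14) by simp
  have all: "\<forall>t \<in> {1, r + 1, 2 * r + 1}. scattered q (monom 1 q + monom \<delta> (q ^ (2 * r + 1))) t"
    using scat_main[OF assms(9) dq dn assms(12,14) c2r] by blast
  thus ?thesis by simp
qed

end
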